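(* Let $M\in\mathrm{SL}(3,\mathbb R)$, $\mathcal D=\mathbb S_1^1$, $K=\mathcal G_{\mathcal D}(M)$, and let $(u_1,\vec v_1),\dots,(u_K,\vec v_K)\in\mathcal Q_{\mathcal D}(M)$ satisfy (V1)–(V3) and $u_i\ge0$ for all $i$. Then for all $1\le i<j\le K-1$ the angle between $\vec v_i$ and $\vec v_j$ is greater than $\pi/3$. Moreover, for all $1\le i<j<k\le K-1$, the vector $\vec v_i$ does not lie in the positive cone $\{a\vec v_j+b\vec v_k: a,b\ge0\}$ determined by $\vec v_j$ and $\vec v_k$.
   Context: Row vectors in $\mathbb R^3$ are written $(u,\vec v)$, $u\in\mathbb R$, $\vec v\in\mathbb R^2$; $\mathbb Z^3M=\{\vec mM:\vec m\in\mathbb Z^3\}$. For $\mathcal D\subseteq\mathbb S_1^1$ (unit circle): $\mathcal Q_{\mathcal D}(M,t)=\{(u,\vec v)\in\mathbb Z^3M:-t<u<1-t,\ \vec v\in\mathbb R_{>0}\mathcal D\}$ for $t\in(0,1)$; $\mathcal Q_{\mathcal D}(M)=\{(u,\vec v)\in\mathbb Z^3M:|u|<1,\ \vec v\in\mathbb R_{>0}\mathcal D\}$; $F_{\mathcal D}(M,t)=\min\{|\vec v|:(u,\vec v)\in\mathcal Q_{\mathcal D}(M,t)\}$; $\mathcal F_{\mathcal D}(M)=\{F_{\mathcal D}(M,t):0<t<1\}$ and $\mathcal G_{\mathcal D}(M)=|\mathcal F_{\mathcal D}(M)|$. Conditions: (V1) $0<|\vec v_1|<\cdots<|\vec v_K|$;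 (V2) each $\delta\in\mathcal F_{\mathcal D}(M)$ equals $|\vec v_i|$ for some $i$; (V3) for each $i$ there is $t\in(0,1)$ with $(u_i,\vec v_i)\in\mathcal Q_{\mathcal D}(M,t)$ and $|\vec v_i|=F_{\mathcal D}(M,t)$. *)

theory Defs
  imports "HOL-Analysis.Analysis"
begin

definition split3 :: "real^3 \<Rightarrow> real \<times> (real^2)" where
  "split3 x = (x $ 1, vector [x $ 2, x $ 3])"

definition lat :: "real^3^3 \<Rightarrow> (real \<times> (real^2)) set" where
  "lat M = {split3 (m v* M) | m. \<forall>i. m $ i \<in> \<int>}"

definition pcone :: "(real^2) set \<Rightarrow> (real^2) set" where
  "pcone D = {c *\<^sub>R d | c d. c > 0 \<and> d \<in> D}"

definition QDt :: "(real^2) set \<Rightarrow> real^3^3 \<Rightarrow> real \<Rightarrow> (real \<times> (real^2)) set" where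
  "QDt D M t = {(u, v) \<in> lat M. - t < u \<and> u < 1 - t \<and> v \<in> pcone D}"

definition QD :: "(real^2) set \<Rightarrow> real^3^3 \<Rightarrow> (real \<times> (real^2)) set" where
  "QD D M = {(u, v) \<in> lat M. \<bar>u\<bar> < 1 \<and> v \<in> pcone D}"

text \<open>F_D(M,t) = min of |v| over Q_D(M,t) (the minimum is attained; we write it as Inf).\<close>
definition FD :: "(real^2) set \<Rightarrow> real^3^3 \<Rightarrow> real \<Rightarrow> real" where
  "FD D M t = Inf ((\<lambda>(u, v). norm v) ` QDt D M t)"

definition FDset :: "(real^2) set \<Rightarrow> real^3^3 \<Rightarrow> real set" where
  "FDset D M = {FD D M t | t. 0 < t \<and> t < 1}"

definition GD :: "(real^2) set \<Rightarrow> real^3^3 \<Rightarrow> nat" where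
  "GD D M = card (FDset D M)"

definition vangle :: "real^2 \<Rightarrow> real^2 \<Rightarrow> real" where
  "vangle x y = arccos ((x \<bullet> y) / (norm x * norm y))"

end

theory Submission
  imports Defs
begin


lemma vm_add: "(m1 + m2) v* (M::real^3^3) = m1 v* M + m2 v* M"
  by (rule vector_matrix_left_distrib)

lemma vm_neg: "(- m) v* (M::real^3^3) = - (m v* M)"
  by (simp add: vector_matrix_mult_def vec_eq_iff sum_negf)

lemma vec2_add: "vector [a, b] + vector [c, d] = (vector [a + c, b + d] :: real^2)"
  unfolding vec_eq_iff forall_2 by simp

lemma vec2_neg: "- vector [a, b] = (vector [- a, - b] :: real^2)"
  unfolding vec_eq_iff forall_2 by simp

lemma lat_add:
  assumes "(u1, v1) \<in> lat M" "(u2, v2) \<in> lat M"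
  shows "(u1 + u2, v1 + v2) \<in> lat M"
proof -
  obtain m1 where m1: "\<forall>i. m1 $ i \<in> \<int>" "(u1, v1) = split3 (m1 v* M)"
    using assms(1) unfolding lat_def by blast
  obtain m2 where m2: "\<forall>i. m2 $ i \<in> \<int>" "(u2, v2) = split3 (m2 v* M)"
    using assms(2) unfolding lat_def by blast
  have "(u1 + u2, v1 + v2) = split3 ((m1 + m2) v* M)"
    using m1(2) m2(2) by (simp add: vm_add split3_def vec2_add)
  moreover have "\<forall>i. (m1 + m2) $ i \<in> \<int>" using m1(1) m2(1) by simp
  ultimately show ?thesis unfolding lat_def by blast
qed

lemma lat_neg:
  assumes "(u1, v1) \<in> lat M"
  shows "(- u1, - v1) \<in> lat M"
proof -
  obtain m1 where m1: "\<forall>i. m1 $ i \<in> \<int>" "(u1, v1) = split3 (m1 v* M)"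
    using assms(1) unfolding lat_def by blast
  have "(- u1, - v1) = split3 ((- m1) v* M)"
    using m1(2) by (simp add: vm_neg split3_def vec2_neg)
  moreover have "\<forall>i. (- m1) $ i \<in> \<int>" using m1(1) by simp
  ultimately show ?thesis unfolding lat_def by blast
qed

lemma lat_diff:
  assumes "(u1, v1) \<in> lat M" "(u2, v2) \<in> lat M"
  shows "(u1 - u2, v1 - v2) \<in> lat M"
  using lat_add[OF assms(1) lat_neg[OF assms(2)]] by simp

lemma pcone_sphere: "v \<in> pcone (sphere 0 1) \<longleftrightarrow> v \<noteq> (0::real^2)"
proof
  assume "v \<in> pcone (sphere 0 1)"
  then obtain c d where "v = c *\<^sub>R d" "c > 0" "d \<in> sphere 0 1" unfolding pcone_def by blast
  then show "v \<noteq> 0" by auto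
next
  assume "v \<noteq> 0"
  then have "v = norm v *\<^sub>R (v /\<^sub>R norm v) \<and> norm v > 0 \<and> v /\<^sub>R norm v \<in> sphere 0 1" by simp
  then show "v \<in> pcone (sphere 0 1)" unfolding pcone_def by blast
qed

lemma FD_le:
  assumes "(u, v) \<in> QDt D M t"
  shows "FD D M t \<le> norm v"
  unfolding FD_def
proof (rule cInf_lower)
  show "norm v \<in> (\<lambda>(u, v). norm v) ` QDt D M t" using assms by force
  show "bdd_below ((\<lambda>(u, v). norm v) ` QDt D M t)"
    by (rule bdd_belowI[where m=0]) auto
qed

lemma QDt_sphere: "(u, v) \<in> QDt (sphere 0 1) M t \<longleftrightarrow> (u, v) \<in> lat M \<and> - t < u \<and> u < 1 - t \<and> v \<noteq> 0"
  unfolding QDt_def by (auto simp: pcone_sphere)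



lemma core:
  fixes a b X Y c :: real
  assumes a0: "a \<ge> 0" and b0: "b \<ge> 0" and X0: "0 < X" and XY: "X < Y"
    and h0: "a^2*X + 2*a*b*c + b^2*Y < X"
    and hq: "0 \<le> a^2*X + 2*a*b*c + b^2*Y"
    and h1: "(a-1)^2*X + 2*(a-1)*b*c + b^2*Y > Y"
    and h2: "a^2*X + 2*a*(b-1)*c + (b-1)^2*Y > Y"
    and h4: "(a-1)^2*X + 2*(a-1)*(b-1)*c + (b-1)^2*Y \<ge> Y"
  shows False
proof -
  define f00 where "f00 = a^2*X + 2*a*b*c + b^2*Y"
  define f10 where "f10 = (a-1)^2*X + 2*(a-1)*b*c + b^2*Y"
  define f01 where "f01 = a^2*X + 2*a*(b-1)*c + (b-1)^2*Y"
  define f11 where "f11 = (a-1)^2*X + 2*(a-1)*(b-1)*c + (b-1)^2*Y"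
  note defs = f00_def f10_def f01_def f11_def
  have Y0: "Y > 0" using X0 XY by linarith
  have c2: False if A: "a \<ge> 1" and B: "b^2 \<le> a"
  proof -
    have id: "a*f10 - (a-1)*f00 = b^2*Y - a*(a-1)*X" unfolding defs by (simp add: algebra_simps power2_eq_square)
    have "a*f10 > a*Y" using h1 A unfolding defs by (intro mult_strict_left_mono) auto
    moreover have "(a-1)*f00 \<le> (a-1)*X" using h0 A unfolding defs by (intro mult_left_mono) auto
    ultimately have "(b^2 - a)*Y > (a-1)^2*X" using id by (simp add: algebra_simps power2_eq_square)
    moreover have "(a-1)^2*X \<ge> 0" using X0 by simp
    moreover have "(b^2 - a)*Y \<le> 0" using B Y0 by (simp add: mult_nonpos_nonneg)
    ultimately show False by linarith
  qed
  have c3: False if A: "b \<ge> 1" and B: "a^2 + b - 1 \<le> b^2"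
  proof -
    have id: "b*f01 - (b-1)*f00 = a^2*X - b*(b-1)*Y" unfolding defs by (simp add: algebra_simps power2_eq_square)
    have "b*f01 > b*Y" using h2 A unfolding defs by (intro mult_strict_left_mono) auto
    moreover have "(b-1)*f00 \<le> (b-1)*X" using h0 A unfolding defs by (intro mult_left_mono) auto
    ultimately have "(a^2 + b - 1)*X > b^2*Y" using id by (simp add: algebra_simps power2_eq_square)
    moreover have "(a^2 + b - 1)*X \<le> b^2*X" using B X0 by (intro mult_right_mono) auto
    moreover have "b^2*X \<le> b^2*Y" using XY by (intro mult_left_mono) auto
    ultimately show False by linarith
  qed
  have c1: False if A: "a \<le> 1" and B: "b \<le> 1"
  proof -
    have id: "(1-a)*(1-b)*f00 + a*(1-b)*f10 + (1-a)*b*f01 + a*b*f11 = a*(1-a)*X + b*(1-b)*Y"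
      unfolding defs by (simp add: algebra_simps power2_eq_square)
    have "(1-a)*(1-b)*f00 \<ge> 0" using A B hq unfolding defs by simp
    moreover have "a*(1-b)*f10 \<ge> a*(1-b)*Y" using A B a0 h1 unfolding defs by (intro mult_left_mono) auto
    moreover have "(1-a)*b*f01 \<ge> (1-a)*b*Y" using A B b0 h2 unfolding defs by (intro mult_left_mono) auto
    moreover have "a*b*f11 \<ge> a*b*Y" using a0 b0 h4 unfolding defs by (intro mult_left_mono) auto
    moreover have "a*(1-a)*X \<le> a*(1-a)*Y" using A a0 XY by (intro mult_left_mono) auto
    ultimately have "(a + b - a*b)*Y \<le> (a*(1-a) + b*(1-b))*Y" using id by (simp add: algebra_simps)
    then have "(a^2 + b^2 - a*b)*Y \<le> 0" by (simp add: algebra_simps power2_eq_square)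
    then have "a^2 + b^2 - a*b \<le> 0" using Y0 by (simp add: mult_le_0_iff)
    moreover have "a^2 + b^2 - a*b = (a-b)^2 + a*b" by (simp add: algebra_simps power2_eq_square)
    moreover have "a*b \<ge> 0" using a0 b0 by simp
    ultimately have "(a-b)^2 = 0" "a*b = 0" by (smt (verit) zero_le_power2)+
    then have "a = 0" "b = 0" by auto
    then show False using h1 XY by simp
  qed
  have c4: False if A: "a \<ge> b" and B: "b > 1" and C: "b^2 > a"
  proof -
    have a1: "a > 1" using A B by linarith
    have id: "a*f10 - (a-1)*f00 = b^2*Y - a*(a-1)*X" unfolding defs by (simp add: algebra_simps power2_eq_square)
    have "a*f10 > a*Y" using h1 a1 unfolding defs by (intro mult_strict_left_mono) auto
    moreover have "(a-1)*f00 \<le> (a-1)*X" using h0 a1 unfolding defs by (intro mult_left_mono) auto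
    ultimately have D1: "(b^2 - a)*Y > (a-1)^2*X" using id by (simp add: algebra_simps power2_eq_square)
    have id4: "a*b*f11 - (a-1)*(b-1)*f00 = a*(a-1)*(a-b)*X + b*(b-1)*(b-a)*Y"
      unfolding defs by (simp add: algebra_simps power2_eq_square)
    have "a*b*f11 \<ge> a*b*Y" using a0 b0 h4 unfolding defs by (intro mult_left_mono) auto
    moreover have "(a-1)*(b-1)*f00 < (a-1)*(b-1)*X" using h0 a1 B unfolding defs by (intro mult_strict_left_mono) auto
    ultimately have "a*(a-1)*(a-b)*X + b*(b-1)*(b-a)*Y > a*b*Y - (a-1)*(b-1)*X" using id4 by linarith
    then have D4: "(a-1)*(a*(a-b) + b - 1)*X > (a*b + b*(b-1)*(a-b))*Y" by (simp add: algebra_simps)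
    define C where "C = a*(a-b) + b - 1"
    define E where "E = a*b + b*(b-1)*(a-b)"
    have C0: "C > 0" unfolding C_def using A B a1 by (smt (verit) mult_nonneg_nonneg)
    have "C*((b^2 - a)*Y) > C*((a-1)^2*X)" using D1 C0 by (intro mult_strict_left_mono) auto
    moreover have "(a-1)*((a-1)*C*X) > (a-1)*(E*Y)" using D4 a1 unfolding C_def E_def
      by (intro mult_strict_left_mono) auto
    ultimately have "(C*(b^2 - a))*Y > ((a-1)*E)*Y" by (simp add: algebra_simps power2_eq_square)
    then have lt: "C*(b^2 - a) > (a-1)*E" using Y0 by simp
    have poly: "(a-1)*E - C*(b^2 - a) = b*(b-1) + (a-b)*(b^2+b-1) + 2*b*(a-b)^2 + (a-b)^3"
      unfolding C_def E_def by (simp add: algebra_simps power2_eq_square power3_eq_cube)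
    have "b^2+b-1 \<ge> 0" using B by (smt (verit) one_le_power)
    then have "b*(b-1) \<ge> 0" "(a-b)*(b^2+b-1) \<ge> 0" "2*b*(a-b)^2 \<ge> 0" "(a-b)^3 \<ge> 0"
      using A B by (auto intro!: mult_nonneg_nonneg)
    then show False using poly lt by linarith
  qed
  have c5: False if A: "b \<ge> a" and B: "a > 1" and C: "b \<le> a + 1"
  proof -
    have b1: "b > 1" using A B by linarith
    have id4: "a*b*f11 - (a-1)*(b-1)*f00 = a*(a-1)*(a-b)*X + b*(b-1)*(b-a)*Y"
      unfolding defs by (simp add: algebra_simps power2_eq_square)
    have "a*b*f11 \<ge> a*b*Y" using a0 b0 h4 unfolding defs by (intro mult_left_mono) auto
    moreover have "(a-1)*(b-1)*f00 < (a-1)*(b-1)*X" using h0 B b1 unfolding defs by (intro mult_strict_left_mono) auto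
    ultimately have "a*(a-1)*(a-b)*X + b*(b-1)*(b-a)*Y > a*b*Y - (a-1)*(b-1)*X" using id4 by linarith
    note D4a = this
    define \<alpha> where "\<alpha> = a*(a-1)*(a-b) + (a-1)*(b-1)"
    define \<beta> where "\<beta> = b*(b-1)*(b-a) - a*b"
    have "\<alpha>*X + \<beta>*Y = (a*(a-1)*(a-b)*X + b*(b-1)*(b-a)*Y) - (a*b*Y - (a-1)*(b-1)*X)"
      unfolding \<alpha>_def \<beta>_def by (simp add: algebra_simps)
    then have D4: "\<alpha>*X + \<beta>*Y > 0" using D4a by linarith
    have sum: "\<alpha> + \<beta> = (a+b-1)*((a-b)^2 - 1)" unfolding \<alpha>_def \<beta>_def by (simp add: algebra_simps power2_eq_square)
    have "(b-a)*(b-a) \<le> 1*1" using A C by (intro mult_mono) auto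
    then have "(a-b)^2 \<le> 1" by (simp add: power2_eq_square algebra_simps)
    then have s0: "\<alpha> + \<beta> \<le> 0" using sum A B by (simp add: mult_nonneg_nonpos)
    have "b*(b-1)*(b-a) \<le> b*(b-1)*1" using A C b1 by (intro mult_left_mono) auto
    moreover have "b*(b-1) \<le> b*a" using C b1 by (intro mult_left_mono) auto
    ultimately have be: "\<beta> \<le> 0" unfolding \<beta>_def by (simp add: algebra_simps)
    have "\<alpha>*X + \<beta>*Y \<le> 0"
    proof (cases "\<alpha> \<ge> 0")
      case True
      then have "\<alpha>*X \<le> \<alpha>*Y" using XY by (intro mult_left_mono) auto
      moreover have "(\<alpha>+\<beta>)*Y \<le> 0" using s0 Y0 by (simp add: mult_nonpos_nonneg)
      ultimately show ?thesis by (simp add: algebra_simps)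
    next
      case False
      then have "\<alpha>*X < 0" using X0 by (simp add: mult_neg_pos)
      moreover have "\<beta>*Y \<le> 0" using be Y0 by (simp add: mult_nonpos_nonneg)
      ultimately show ?thesis by linarith
    qed
    then show False using D4 by linarith
  qed
  show False
  proof (cases "a \<le> 1 \<and> b \<le> 1")
    case True then show ?thesis using c1 by blast
  next
    case nb: False
    show ?thesis
    proof (cases "a \<ge> 1 \<and> b \<le> 1")
      case True
      then have "b^2 \<le> a" using b0 by (smt (verit) power_le_one)
      then show ?thesis using c2 True by blast
    next
      case False
      show ?thesis
      proof (cases "b \<ge> 1 \<and> a \<le> 1")
        case True
        then have "a^2 \<le> 1" using a0 by (simp add: power_le_one)
        moreover have "b \<le> b^2" using True by (simp add: power2_eq_square)
        ultimately show ?thesis using c3 True by linarith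
      next
        case False
        then have ab: "a > 1" "b > 1" using nb \<open>\<not> (a \<ge> 1 \<and> b \<le> 1)\<close> by linarith+
        show ?thesis
        proof (cases "a \<ge> b")
          case True
          then show ?thesis using c2 c4 ab by linarith
        next
          case False
          show ?thesis
          proof (cases "b \<le> a + 1")
            case True then show ?thesis using c5 False ab by linarith
          next
            case False
            have "b*(b-1) \<ge> (a+1)*a" using False ab by (intro mult_mono) auto
            then have "a^2 + b - 1 \<le> b^2" using ab by (simp add: algebra_simps power2_eq_square)
            then show ?thesis using c3 ab by linarith
          qed
        qed
      qed
    qed
  qed
qed


lemma nsq: "norm (p *\<^sub>R x + q *\<^sub>R y)^2 = p^2 * (x \<bullet> x) + 2*p*q*(x \<bullet> y) + q^2 * (y \<bullet> y)"
  for x y :: "real^2"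
  by (simp only: power2_norm_eq_inner) (simp add: inner_add_left inner_add_right inner_commute algebra_simps power2_eq_square)

theorem proposition5p3:
  fixes M :: "real^3^3" and K :: nat and u :: "nat \<Rightarrow> real" and v :: "nat \<Rightarrow> real^2"
  assumes detM: "det M = 1"
    and K: "K = GD (sphere 0 1) M"
    and inQ: "\<forall>i\<in>{1..K}. (u i, v i) \<in> QD (sphere 0 1) M"
    and V1: "(\<forall>i\<in>{1..K}. 0 < norm (v i)) \<and> (\<forall>i j. 1 \<le> i \<and> i < j \<and> j \<le> K \<longrightarrow> norm (v i) < norm (v j))"
    and V2: "\<forall>\<delta>\<in>FDset (sphere 0 1) M. \<exists>i\<in>{1..K}. \<delta> = norm (v i)"
    and V3: "\<forall>i\<in>{1..K}. \<exists>t. 0 < t \<and> t < 1 \<and> (u i, v i) \<in> QDt (sphere 0 1) M t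
                 \<and> norm (v i) = FD (sphere 0 1) M t"
    and upos: "\<forall>i\<in>{1..K}. u i \<ge> 0"
  shows "(\<forall>i j. 1 \<le> i \<and> i < j \<and> j \<le> K - 1 \<longrightarrow> vangle (v i) (v j) > pi / 3)
       \<and> (\<forall>i j k. 1 \<le> i \<and> i < j \<and> j < k \<and> k \<le> K - 1 \<longrightarrow>
            v i \<notin> {a *\<^sub>R v j + b *\<^sub>R v k | a b. a \<ge> 0 \<and> b \<ge> 0})"
proof -
  let ?S = "sphere (0::real^2) 1"
  obtain tt where tt: "\<forall>m\<in>{1..K}. 0 < tt m \<and> tt m < 1 \<and> (u m, v m) \<in> QDt ?S M (tt m)
                 \<and> norm (v m) = FD ?S M (tt m)"
    using bchoice[OF V3] by blast
  have latm: "(u m, v m) \<in> lat M" if "m \<in> {1..K}" for m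
    using inQ that unfolding QD_def by auto
  have ttm: "0 < tt m" "tt m < 1" "(u m, v m) \<in> QDt ?S M (tt m)" "norm (v m) = FD ?S M (tt m)"
    if "m \<in> {1..K}" for m
    using tt that by auto
  have ult: "u m < 1 - tt m" if "m \<in> {1..K}" for m
    using ttm(3)[OF that] unfolding QDt_sphere by blast
  have ut1: "u m < 1" if "m \<in> {1..K}" for m
    using ttm(1)[OF that] ult[OF that] by linarith
  have vnz: "v m \<noteq> 0" if "m \<in> {1..K}" for m
    using V1 that by auto
  have lessv: "norm (v m) < norm (v n)" if "1 \<le> m" "m < n" "n \<le> K" for m n
    using V1 that by auto
  have W: "norm (v n) \<le> norm v'" if "n \<in> {1..K}" "(u', v') \<in> lat M" "v' \<noteq> 0"
    "- tt n < u'" "u' < 1 - tt n" for n u' v'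
  proof -
    have "(u', v') \<in> QDt ?S M (tt n)" unfolding QDt_sphere using that by blast
    then have "FD ?S M (tt n) \<le> norm v'" by (rule FD_le)
    then show ?thesis using ttm(4)[OF that(1)] by simp
  qed
  have below: "u m \<ge> tt n \<and> u m \<ge> 1 - tt n" if "1 \<le> m" "m < n" "n \<le> K" for m n
  proof -
    have mK: "m \<in> {1..K}" and nK: "n \<in> {1..K}" using that by auto
    have lt: "norm (v m) < norm (v n)" using lessv that by blast
    have t0: "0 < tt n" "tt n < 1" using ttm[OF nK] by auto
    have u0: "0 \<le> u m" using upos mK by blast
    have "\<not> u m < 1 - tt n"
    proof
      assume "u m < 1 - tt n"
      moreover have "- tt n < u m" using u0 t0 by linarith
      ultimately have "norm (v n) \<le> norm (v m)" using W[OF nK latm[OF mK] vnz[OF mK]] by blast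
      then show False using lt by simp
    qed
    moreover have "\<not> u m < tt n"
    proof
      assume "u m < tt n"
      then have h1: "- tt n < - u m" by linarith
      have h2: "- u m < 1 - tt n" using u0 t0 by linarith
      have "- v m \<noteq> 0" using vnz[OF mK] by simp
      then have "norm (v n) \<le> norm (- v m)"
        using W[OF nK lat_neg[OF latm[OF mK]]] h1 h2 by blast
      then show False using lt by simp
    qed
    ultimately show ?thesis by simp
  qed
  have half: "u m \<ge> 1/2" if "1 \<le> m" "m < K" for m
    using below[OF that(1) that(2) order_refl] by linarith
  have order: "u n < u m" if "1 \<le> m" "m < n" "n \<le> K" for m n
  proof -
    have "n \<in> {1..K}" using that by auto
    then show ?thesis using below[OF that] ult[of n] by linarith
  qed
  have W': "norm (v K) \<le> norm v'" if "K \<ge> 1" "(u', v') \<in> lat M" "v' \<noteq> 0" "0 \<le> u'" "u' < 1/2" for u' v'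
  proof -
    have KK: "K \<in> {1..K}" using that by auto
    have t0: "0 < tt K" "tt K < 1" using ttm[OF KK] by auto
    show ?thesis
    proof (cases "tt K \<le> 1/2")
      case True
      then have "- tt K < u'" "u' < 1 - tt K" using that t0 by linarith+
      then show ?thesis using W[OF KK that(2) that(3)] by blast
    next
      case False
      have "- tt K < - u'" "- u' < 1 - tt K" using that t0 False by linarith+
      moreover have "- v' \<noteq> 0" using that by simp
      ultimately have "norm (v K) \<le> norm (- v')"
        using W[OF KK lat_neg[OF that(2)]] by blast
      then show ?thesis by simp
    qed
  qed
  have part1: "vangle (v i) (v j) > pi / 3" if ij: "1 \<le> i" "i < j" "j \<le> K - 1" for i j
  proof (rule ccontr)
    assume na: "\<not> vangle (v i) (v j) > pi / 3"
    have iK: "i \<in> {1..K}" and jK: "j \<in> {1..K}" and jK': "j < K" using ij by auto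
    define x where "x = v i"
    define y where "y = v j"
    have xn: "norm x > 0" "norm y > 0" using vnz iK jK x_def y_def by auto
    have xy: "norm x < norm y" using lessv ij jK' x_def y_def by auto
    define r where "r = (x \<bullet> y) / (norm x * norm y)"
    have "\<bar>x \<bullet> y\<bar> \<le> norm x * norm y" by (rule Cauchy_Schwarz_ineq2)
    then have r1: "- 1 \<le> r" "r \<le> 1" using xn unfolding r_def by (auto simp: divide_simps abs_le_iff)
    have "r \<ge> 1/2"
    proof (rule ccontr)
      assume "\<not> r \<ge> 1/2"
      then have "arccos (1/2) < arccos r" using r1 by (intro arccos_less_arccos) auto
      then show False using na unfolding vangle_def r_def x_def y_def by simp
    qed
    then have "x \<bullet> y \<ge> norm x * norm y / 2" using xn unfolding r_def by (simp add: divide_simps)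
    moreover have "norm x * norm x < norm x * norm y" using xn xy by simp
    moreover have "norm (x - y)^2 = norm x ^2 + norm y ^2 - 2 * (x \<bullet> y)"
      by (simp add: power2_norm_eq_inner inner_diff_left inner_diff_right inner_commute)
    ultimately have "norm (x - y)^2 < norm y ^2" by (simp add: power2_eq_square)
    then have lt: "norm (x - y) < norm y" by (simp add: power_less_imp_less_base)
    have ui: "u j < u i" using order ij jK' by auto
    have uh: "u j \<ge> 1/2" using half ij jK' by auto
    have "norm y \<le> norm (x - y)"
      unfolding x_def y_def
    proof (rule W[OF jK lat_diff[OF latm[OF iK] latm[OF jK]]])
      show "v i - v j \<noteq> 0" using xy x_def y_def by auto
      have "0 < tt j" using ttm(1)[OF jK] .
      then show "- tt j < u i - u j" using ui by linarith
      show "u i - u j < 1 - tt j" using ult[OF jK] ut1[OF iK] uh by linarith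
    qed
    then show False using lt by simp
  qed
  have part2: "v i \<notin> {a *\<^sub>R v j + b *\<^sub>R v k | a b. a \<ge> 0 \<and> b \<ge> 0}"
    if ijk: "1 \<le> i" "i < j" "j < k" "k \<le> K - 1" for i j k
  proof
    assume "v i \<in> {a *\<^sub>R v j + b *\<^sub>R v k | a b. a \<ge> 0 \<and> b \<ge> 0}"
    then obtain a b where ab: "a \<ge> 0" "b \<ge> 0" "v i = a *\<^sub>R v j + b *\<^sub>R v k" by blast
    have iK: "i \<in> {1..K}" and jK: "j \<in> {1..K}" and kK: "k \<in> {1..K}" and kK': "k < K" and K1: "K \<ge> 1"
      using ijk by auto
    have KK: "K \<in> {1..K}" using K1 by auto
    have uij: "u j < u i" "u k < u i" "u k < u j" using order ijk kK' by auto
    have uh: "u i \<ge> 1/2" "u j \<ge> 1/2" "u k \<ge> 1/2" using half ijk kK' by auto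
    have ut: "u i < 1" "u j < 1" "u k < 1" using ut1 iK jK kK by auto
    have nkK: "norm (v k) < norm (v K)" using lessv ijk kK' by auto
    have nij: "norm (v i) < norm (v j)" "norm (v j) < norm (v k)" using lessv ijk kK' by auto
    have F1: "norm (v i - v j) > norm (v k)"
    proof -
      have "v i - v j \<noteq> 0" using nij by auto
      moreover have "0 \<le> u i - u j" "u i - u j < 1/2" using uij uh ut by linarith+
      ultimately have "norm (v K) \<le> norm (v i - v j)"
        using W'[OF K1 lat_diff[OF latm[OF iK] latm[OF jK]]] by blast
      then show ?thesis using nkK by linarith
    qed
    have F2: "norm (v i - v k) > norm (v k)"
    proof -
      have "v i \<noteq> v k" using nij by auto
      then have "v i - v k \<noteq> 0" by simp
      moreover have "0 \<le> u i - u k" "u i - u k < 1/2" using uij uh ut by linarith+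
      ultimately have "norm (v K) \<le> norm (v i - v k)"
        using W'[OF K1 lat_diff[OF latm[OF iK] latm[OF kK]]] by blast
      then show ?thesis using nkK by linarith
    qed
    have F4: "norm (v j + v k - v i) \<ge> norm (v k)"
    proof (cases "v j + v k - v i = 0")
      case True
      then have "v i - v j = v k" by (simp add: algebra_simps)
      then show ?thesis using F1 by simp
    next
      case False
      have L: "(u j + u k - u i, v j + v k - v i) \<in> lat M"
        using lat_diff[OF lat_add[OF latm[OF jK] latm[OF kK]] latm[OF iK]] by simp
      show ?thesis
      proof (rule W[OF kK L False])
        show "- tt k < u j + u k - u i" using ttm(1)[OF kK] uh ut by linarith
        show "u j + u k - u i < 1 - tt k" using ult[OF kK] uij by linarith
      qed
    qed
    define x where "x = v j"
    define y where "y = v k"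
    define X where "X = x \<bullet> x"
    define Y where "Y = y \<bullet> y"
    define c where "c = x \<bullet> y"
    have nX: "norm x ^2 = X" unfolding X_def by (simp add: power2_norm_eq_inner)
    have nY: "norm y ^2 = Y" unfolding Y_def by (simp add: power2_norm_eq_inner)
    have z: "v i = a *\<^sub>R x + b *\<^sub>R y" using ab x_def y_def by simp
    have X0: "0 < X" using vnz[OF jK] nX x_def by (metis zero_less_norm_iff zero_less_power)
    have "norm x ^2 < norm y ^2" using nij(2) x_def y_def by (simp add: power_strict_mono)
    then have XY: "X < Y" using nX nY by simp
    have h0': "norm (v i)^2 < norm x ^2" using nij(1) x_def by (simp add: power_strict_mono)
    have h0: "a^2*X + 2*a*b*c + b^2*Y < X"
      using h0' nsq[of a x b y] z nX unfolding X_def Y_def c_def by simp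
    have hq: "0 \<le> a^2*X + 2*a*b*c + b^2*Y"
      using nsq[of a x b y] unfolding X_def Y_def c_def by (metis zero_le_power2)
    have e1: "v i - v j = (a-1) *\<^sub>R x + b *\<^sub>R y" using z x_def by (simp add: algebra_simps)
    have h1': "norm (v i - v j)^2 > norm y ^2" using F1 y_def by (simp add: power_strict_mono)
    have h1: "(a-1)^2*X + 2*(a-1)*b*c + b^2*Y > Y"
      using h1' nsq[of "a-1" x b y] e1 nY unfolding X_def Y_def c_def by simp
    have e2: "v i - v k = a *\<^sub>R x + (b-1) *\<^sub>R y" using z y_def by (simp add: algebra_simps)
    have h2': "norm (v i - v k)^2 > norm y ^2" using F2 y_def by (simp add: power_strict_mono)
    have h2: "a^2*X + 2*a*(b-1)*c + (b-1)^2*Y > Y"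
      using h2' nsq[of a x "b-1" y] e2 nY unfolding X_def Y_def c_def by simp
    have "v j + v k - v i = - ((a-1) *\<^sub>R x + (b-1) *\<^sub>R y)"
      using z unfolding x_def y_def by (simp add: algebra_simps)
    then have e4: "norm (v j + v k - v i) = norm ((a-1) *\<^sub>R x + (b-1) *\<^sub>R y)"
      by (metis norm_minus_cancel)
    have h4': "norm (v j + v k - v i)^2 \<ge> norm y ^2" using F4 y_def by (simp add: power_mono)
    have h4: "(a-1)^2*X + 2*(a-1)*(b-1)*c + (b-1)^2*Y \<ge> Y"
      using h4' nsq[of "a-1" x "b-1" y] e4 nY unfolding X_def Y_def c_def by simp
    show False using core[OF ab(1) ab(2) X0 XY h0 hq h1 h2 h4] .
  qed
  show ?thesis using part1 part2 by blast
qed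

end
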